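(* For each $a\in(0,1)$ there is a unique $b\in(0,1)$ such that $[(a,0)]=[(0,-b^2)]$. Moreover, the map $(0,1)\to(0,1)$ sending $a$ to this $b$ is a diffeomorphism of $(0,1)$.
   Context: $\mathbb{D}$ is the open unit disc and $\mathrm{Aut}(\mathbb{D})$ its holomorphic automorphism group. $\mathbb{G}=\{(z_1+z_2,z_1z_2):z_1,z_2\in\mathbb{D}\}$. For $\varphi\in\mathrm{Aut}(\mathbb{D})$, $H_\varphi(z_1+z_2,z_1z_2)=(\varphi(z_1)+\varphi(z_2),\varphi(z_1)\varphi(z_2))$. For $(s,p)\in\mathbb{G}$, $[(s,p)]=\{H_\varphi(s,p):\varphi\in\mathrm{Aut}(\mathbb{D})\}$ is its orbit. *)

theory Defs
  imports "HOL-Analysis.Analysis"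
begin

definition unit_disc :: "complex set" where
  "unit_disc = ball 0 1"

text \<open>Holomorphic automorphisms of the unit disc: holomorphic bijections of the disc onto itself
  (the inverse of such a map is automatically holomorphic).\<close>
definition disc_aut :: "(complex \<Rightarrow> complex) set" where
  "disc_aut = {\<phi>. \<phi> holomorphic_on unit_disc \<and> bij_betw \<phi> unit_disc unit_disc}"

definition symm_bidisc :: "(complex \<times> complex) set" where
  "symm_bidisc = {(z1 + z2, z1 * z2) | z1 z2. z1 \<in> unit_disc \<and> z2 \<in> unit_disc}"

definition symm_orbit :: "complex \<times> complex \<Rightarrow> (complex \<times> complex) set" where
  "symm_orbit sp = {(\<phi> z1 + \<phi> z2, \<phi> z1 * \<phi> z2) | \<phi> z1 z2.
      \<phi> \<in> disc_aut \<and> z1 \<in> unit_disc \<and> z2 \<in> unit_disc \<and> sp = (z1 + z2, z1 * z2)}"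

definition smooth_on :: "real set \<Rightarrow> (real \<Rightarrow> real) \<Rightarrow> bool" where
  "smooth_on S f \<longleftrightarrow> (\<forall>n. \<forall>x\<in>S. ((deriv ^^ n) f) differentiable (at x))"

definition real_diffeomorphism :: "real set \<Rightarrow> real set \<Rightarrow> (real \<Rightarrow> real) \<Rightarrow> bool" where
  "real_diffeomorphism S T f \<longleftrightarrow>
     bij_betw f S T \<and> smooth_on S f \<and> smooth_on T (inv_into S f)"

end

theory Submission
  imports Defs "HOL-Complex_Analysis.Complex_Analysis"
begin

abbreviation M where "M \<equiv> Moebius_function 0"

lemma M_real: "M (complex_of_real w) (complex_of_real z) = complex_of_real ((z - w) / (1 - w * z))"
  by (simp add: Moebius_function_def)

lemma schwarz_pick:
  assumes holf: "f holomorphic_on ball 0 1" and im: "f ` ball 0 1 \<subseteq> ball 0 1"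
    and z: "norm z < 1" and w: "norm w < 1"
  shows "norm (M (f w) (f z)) \<le> norm (M w z)"
proof -
  define g where "g = (\<lambda>\<xi>. M (f w) (f (M (-w) \<xi>)))"
  have fw: "norm (f w) < 1" using im w by (force simp: subset_iff)
  have Mim: "M (-w) ` ball 0 1 \<subseteq> ball 0 1"
    using Moebius_function_norm_lt_1[of "-w"] w by auto
  have h1: "(f \<circ> M (-w)) holomorphic_on ball 0 1"
    by (rule holomorphic_on_compose_gen[OF Moebius_function_holomorphic holf Mim]) (use w in auto)
  have h2: "(M (f w) \<circ> (f \<circ> M (-w))) holomorphic_on ball 0 1"
    by (rule holomorphic_on_compose_gen[OF h1 Moebius_function_holomorphic[OF fw]])
       (use Mim im in auto)
  have hg: "g holomorphic_on ball 0 1" using h2 by (simp add: g_def o_def)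
  have g0: "g 0 = 0" by (simp add: g_def Moebius_function_of_zero Moebius_function_eq_zero)
  have gn: "norm (g \<xi>) < 1" if "norm \<xi> < 1" for \<xi>
  proof -
    have "norm (M (-w) \<xi>) < 1" using Moebius_function_norm_lt_1[of "-w" \<xi>] w that by auto
    hence "norm (f (M (-w) \<xi>)) < 1" using im by (force simp: subset_iff)
    thus ?thesis unfolding g_def using Moebius_function_norm_lt_1[OF fw] by auto
  qed
  have xi: "norm (M w z) < 1" using Moebius_function_norm_lt_1[OF w z] .
  have "g (M w z) = M (f w) (f z)"
    unfolding g_def using Moebius_function_compose[of "-w" w z] w z by simp
  with Schwarz_Lemma(1)[OF hg g0 gn xi] show ?thesis by simp
qed


definition hh :: "real \<Rightarrow> real" where "hh t = 2 * t / (1 + t * t)"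

lemma sq_cases: fixes z :: complex shows "z * z = of_real b * of_real b \<Longrightarrow> z = of_real b \<or> z = of_real (-b)"
proof -
  assume "z * z = of_real b * of_real b"
  hence "(z - of_real b) * (z + of_real b) = 0" by (simp add: algebra_simps)
  thus ?thesis by (auto simp: add_eq_0_iff)
qed

lemma M_pm: "norm (M (complex_of_real (-b)) (complex_of_real b)) = \<bar>hh b\<bar>"
  "norm (M (complex_of_real b) (complex_of_real (-b))) = \<bar>hh b\<bar>"
  by (simp_all only: M_real norm_of_real) (simp_all add: hh_def)

lemma orbit_bound:
  assumes b: "b \<in> {0<..<1::real}" and c: "c \<in> {0<..<1::real}"
    and mem: "(0, - (complex_of_real c * complex_of_real c)) \<in> symm_orbit (0, - (complex_of_real b * complex_of_real b))"
  shows "hh c \<le> hh b"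
proof -
  obtain \<phi> z1 z2 where phi: "\<phi> \<in> disc_aut" and z: "z1 \<in> unit_disc" "z2 \<in> unit_disc"
    and e1: "(0, - (complex_of_real b * complex_of_real b)) = (z1 + z2, z1 * z2)"
    and e2: "(0, - (complex_of_real c * complex_of_real c)) = (\<phi> z1 + \<phi> z2, \<phi> z1 * \<phi> z2)"
    using mem unfolding symm_orbit_def by blast
  have z2: "z2 = - z1" using e1 by (simp add: eq_neg_iff_add_eq_0 add.commute)
  hence "z1 * z1 = of_real b * of_real b" using e1 by simp
  hence z1: "z1 = of_real b \<or> z1 = of_real (-b)" by (rule sq_cases)
  have p2: "\<phi> z2 = - \<phi> z1" using e2 by (simp add: eq_neg_iff_add_eq_0 add.commute)
  hence "\<phi> z1 * \<phi> z1 = of_real c * of_real c" using e2 by simp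
  hence p1: "\<phi> z1 = of_real c \<or> \<phi> z1 = of_real (-c)" by (rule sq_cases)
  have hol: "\<phi> holomorphic_on ball 0 1" and im: "\<phi> ` ball 0 1 \<subseteq> ball 0 1"
    using phi unfolding disc_aut_def unit_disc_def bij_betw_def by auto
  have "norm (M (\<phi> z2) (\<phi> z1)) \<le> norm (M z2 z1)"
    by (rule schwarz_pick[OF hol im]) (use z in \<open>auto simp: unit_disc_def\<close>)
  moreover have "norm (M (\<phi> z2) (\<phi> z1)) = \<bar>hh c\<bar>"
    using p1 p2 M_pm[of c] by auto
  moreover have "norm (M z2 z1) = \<bar>hh b\<bar>"
    using z1 z2 M_pm[of b] by auto
  moreover have "hh b > 0" "hh c > 0" using b c by (auto simp: hh_def intro!: divide_pos_pos add_pos_nonneg)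
  ultimately show ?thesis by simp
qed


lemma disc_aut_comp: "\<phi> \<in> disc_aut \<Longrightarrow> \<psi> \<in> disc_aut \<Longrightarrow> (\<phi> \<circ> \<psi>) \<in> disc_aut"
proof -
  assume a: "\<phi> \<in> disc_aut" "\<psi> \<in> disc_aut"
  hence h: "\<phi> holomorphic_on unit_disc" "\<psi> holomorphic_on unit_disc"
    and bj: "bij_betw \<phi> unit_disc unit_disc" "bij_betw \<psi> unit_disc unit_disc"
    by (auto simp: disc_aut_def)
  have "\<psi> ` unit_disc \<subseteq> unit_disc" using bj(2) by (simp add: bij_betw_def)
  hence "(\<phi> \<circ> \<psi>) holomorphic_on unit_disc" by (rule holomorphic_on_compose_gen[OF h(2) h(1)])
  moreover have "bij_betw (\<phi> \<circ> \<psi>) unit_disc unit_disc" by (rule bij_betw_trans[OF bj(2) bj(1)])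
  ultimately show ?thesis by (simp add: disc_aut_def)
qed

lemma M_aut: assumes "\<bar>t\<bar> < 1" shows "M (complex_of_real t) \<in> disc_aut"
proof -
  have n: "norm (complex_of_real t) < 1" "norm (- complex_of_real t) < 1" using assms by auto
  show ?thesis unfolding disc_aut_def unit_disc_def
  proof (intro CollectI conjI)
    show "M (complex_of_real t) holomorphic_on ball 0 1" by (rule Moebius_function_holomorphic[OF n(1)])
    show "bij_betw (M (complex_of_real t)) (ball 0 1) (ball 0 1)"
      by (rule bij_betw_byWitness[where f'="M (- complex_of_real t)"])
         (use n Moebius_function_compose Moebius_function_norm_lt_1 in auto)
  qed
qed

lemma orbit_sub:
  assumes psi: "\<psi> \<in> disc_aut"
    and H: "\<And>z1 z2. z1 \<in> unit_disc \<Longrightarrow> z2 \<in> unit_disc \<Longrightarrow> sp = (z1 + z2, z1 * z2) \<Longrightarrow>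
       \<exists>w1 w2. w1 \<in> unit_disc \<and> w2 \<in> unit_disc \<and> sq = (w1 + w2, w1 * w2) \<and> \<psi> w1 = z1 \<and> \<psi> w2 = z2"
  shows "symm_orbit sp \<subseteq> symm_orbit sq"
proof
  fix x assume "x \<in> symm_orbit sp"
  then obtain \<phi> z1 z2 where phi: "\<phi> \<in> disc_aut" and z: "z1 \<in> unit_disc" "z2 \<in> unit_disc"
    and sp: "sp = (z1 + z2, z1 * z2)" and x: "x = (\<phi> z1 + \<phi> z2, \<phi> z1 * \<phi> z2)"
    unfolding symm_orbit_def by blast
  obtain w1 w2 where w: "w1 \<in> unit_disc" "w2 \<in> unit_disc" "sq = (w1 + w2, w1 * w2)" "\<psi> w1 = z1" "\<psi> w2 = z2"
    using H[OF z sp] by blast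
  have "x = ((\<phi> \<circ> \<psi>) w1 + (\<phi> \<circ> \<psi>) w2, (\<phi> \<circ> \<psi>) w1 * (\<phi> \<circ> \<psi>) w2)" using x w by simp
  with disc_aut_comp[OF phi psi] w show "x \<in> symm_orbit sq" unfolding symm_orbit_def by blast
qed

lemma hh_calc: assumes "0 < b" "b < 1" shows "(hh b - b) / (1 - b * hh b) = b"
proof -
  have p: "1 + b * b > 0" using assms by (simp add: add_pos_nonneg)
  have q: "1 - b * b > 0" proof -
    have "b*b < 1*1" by (rule mult_strict_mono) (use assms in auto)
    thus ?thesis by simp
  qed
  have A: "1 - b * hh b = (1 - b*b) / (1 + b*b)" using p by (simp add: hh_def field_simps)
  have B: "hh b - b = b * (1 - b*b) / (1 + b*b)" using p by (simp add: hh_def field_simps)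
  have C: "hh b - b = b * (1 - b * hh b)" unfolding A B by simp
  have "1 - b * hh b \<noteq> 0" unfolding A using p q by simp
  thus ?thesis unfolding C by simp
qed

lemma orbit_eq:
  assumes b: "0 < b" "b < 1"
  shows "symm_orbit (complex_of_real (hh b), 0) = symm_orbit (0, - (complex_of_real b * complex_of_real b))"
proof
  have D: "complex_of_real t \<in> unit_disc" if "\<bar>t\<bar> < 1" for t using that by (simp add: unit_disc_def)
  have hb: "0 < hh b" "hh b < 1"
  proof -
    show "0 < hh b" using b by (auto simp: hh_def intro!: divide_pos_pos add_pos_nonneg)
    have "0 < (1 - b)^2" using b by simp
    hence "2 * b < 1 + b * b" by (simp add: power2_eq_square algebra_simps)
    thus "hh b < 1" using b by (simp add: hh_def add_pos_nonneg)
  qed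
  have c1: "M (complex_of_real (-b)) (M (complex_of_real b) z) = z" if "z \<in> unit_disc" for z
    using Moebius_function_compose[of "complex_of_real (-b)" "complex_of_real b" z] that b by (simp add: unit_disc_def)
  have c2: "M (complex_of_real b) (M (complex_of_real (-b)) z) = z" if "z \<in> unit_disc" for z
    using Moebius_function_compose[of "complex_of_real b" "complex_of_real (-b)" z] that b by (simp add: unit_disc_def)
  have e1: "M (complex_of_real b) 0 = complex_of_real (-b)" by (simp add: Moebius_function_def)
  have e2: "M (complex_of_real b) (complex_of_real (hh b)) = complex_of_real b"
    by (simp only: M_real hh_calc[OF b])
  have e3: "M (complex_of_real (-b)) (complex_of_real (-b)) = 0" by (simp add: Moebius_function_eq_zero)
  have e4: "M (complex_of_real (-b)) (complex_of_real b) = complex_of_real (hh b)"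
    by (simp only: M_real) (simp add: hh_def)
  show "symm_orbit (complex_of_real (hh b), 0) \<subseteq> symm_orbit (0, - (complex_of_real b * complex_of_real b))"
  proof (rule orbit_sub[OF M_aut[of "-b"]])
    show "\<bar>- b\<bar> < 1" using b by simp
    fix z1 z2 assume z: "z1 \<in> unit_disc" "z2 \<in> unit_disc" and sp: "(complex_of_real (hh b), 0) = (z1 + z2, z1 * z2)"
    hence "(z1 = 0 \<and> z2 = complex_of_real (hh b)) \<or> (z2 = 0 \<and> z1 = complex_of_real (hh b))" by auto
    thus "\<exists>w1 w2. w1 \<in> unit_disc \<and> w2 \<in> unit_disc \<and> (0, - (complex_of_real b * complex_of_real b)) = (w1 + w2, w1 * w2)
          \<and> M (complex_of_real (-b)) w1 = z1 \<and> M (complex_of_real (-b)) w2 = z2"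
    proof
      assume "z1 = 0 \<and> z2 = complex_of_real (hh b)"
      thus ?thesis using z e3 e4 D[of b] D[of "-b"] b
        by (intro exI[of _ "complex_of_real (-b)"] exI[of _ "complex_of_real b"]) auto
    next
      assume "z2 = 0 \<and> z1 = complex_of_real (hh b)"
      thus ?thesis using z e3 e4 D[of b] D[of "-b"] b
        by (intro exI[of _ "complex_of_real b"] exI[of _ "complex_of_real (-b)"]) auto
    qed
  qed
  show "symm_orbit (0, - (complex_of_real b * complex_of_real b)) \<subseteq> symm_orbit (complex_of_real (hh b), 0)"
  proof (rule orbit_sub[OF M_aut[of "b"]])
    show "\<bar>b\<bar> < 1" using b by simp
    fix z1 z2 assume z: "z1 \<in> unit_disc" "z2 \<in> unit_disc" and sp: "(0, - (complex_of_real b * complex_of_real b)) = (z1 + z2, z1 * z2)"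
    have z2: "z2 = - z1" using sp by (simp add: eq_neg_iff_add_eq_0 add.commute)
    hence "z1 * z1 = of_real b * of_real b" using sp by simp
    hence "z1 = of_real b \<or> z1 = of_real (-b)" by (rule sq_cases)
    thus "\<exists>w1 w2. w1 \<in> unit_disc \<and> w2 \<in> unit_disc \<and> (complex_of_real (hh b), 0) = (w1 + w2, w1 * w2)
          \<and> M (complex_of_real b) w1 = z1 \<and> M (complex_of_real b) w2 = z2"
    proof
      assume "z1 = of_real b"
      thus ?thesis using z z2 e1 e2 D[of "hh b"] hb D[of "-b"] b
        by (intro exI[of _ "complex_of_real (hh b)"] exI[of _ 0]) (auto simp: unit_disc_def)
    next
      assume "z1 = of_real (-b)"
      thus ?thesis using z z2 e1 e2 D[of "hh b"] hb D[of "-b"] b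
        by (intro exI[of _ 0] exI[of _ "complex_of_real (hh b)"]) (auto simp: unit_disc_def)
    qed
  qed
qed



inductive R :: "(real \<Rightarrow> real) \<Rightarrow> bool" where
  Rc: "R (\<lambda>x. c)"
| Rid: "R (\<lambda>x. x)"
| Rinv: "R (\<lambda>x. 1 / x)"
| Rs: "R (\<lambda>x. sqrt (1 - x * x))"
| Ris: "R (\<lambda>x. 1 / sqrt (1 - x * x))"
| Rq: "R (\<lambda>x. 1 / (1 + x * x))"
| Radd: "R f \<Longrightarrow> R g \<Longrightarrow> R (\<lambda>x. f x + g x)"
| Rmult: "R f \<Longrightarrow> R g \<Longrightarrow> R (\<lambda>x. f x * g x)"

lemma R_deriv: "R f \<Longrightarrow> \<exists>g. R g \<and> (\<forall>x\<in>{0<..<1}. (f has_real_derivative g x) (at x))"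
proof (induction rule: R.induct)
  case (Rc c) show ?case by (intro exI[of _ "\<lambda>x. 0"] conjI R.Rc) auto
next
  case Rid show ?case by (intro exI[of _ "\<lambda>x. 1"] conjI R.Rc) auto
next
  case Rinv
  show ?case
  proof (intro exI[of _ "\<lambda>x. (-1) * (1/x) * (1/x)"] conjI ballI)
    show "R (\<lambda>x. (-1) * (1/x) * (1/x))" by (intro R.intros)
    fix x :: real assume x: "x \<in> {0<..<1}"
    show "((\<lambda>x. 1 / x) has_real_derivative (-1) * (1/x) * (1/x)) (at x)"
      using x by (auto intro!: derivative_eq_intros simp: field_simps power2_eq_square)
  qed
next
  case Rs
  show ?case
  proof (intro exI[of _ "\<lambda>x. (-1) * x * (1 / sqrt (1 - x * x))"] conjI ballI)
    show "R (\<lambda>x. (-1) * x * (1 / sqrt (1 - x * x)))" by (intro R.intros)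
    fix x :: real assume x: "x \<in> {0<..<1}"
    have "x * x < 1 * 1" by (rule mult_strict_mono) (use x in auto)
    then have pos: "0 < 1 - x * x" by simp
    show "((\<lambda>x. sqrt (1 - x * x)) has_real_derivative (-1) * x * (1 / sqrt (1 - x * x))) (at x)"
      using pos by (auto intro!: derivative_eq_intros simp: field_simps)
  qed
next
  case Ris
  show ?case
  proof (intro exI[of _ "\<lambda>x. x * (1 / sqrt (1 - x * x)) * (1 / sqrt (1 - x * x)) * (1 / sqrt (1 - x * x))"] conjI ballI)
    show "R (\<lambda>x. x * (1 / sqrt (1 - x * x)) * (1 / sqrt (1 - x * x)) * (1 / sqrt (1 - x * x)))" by (intro R.intros)
    fix x :: real assume x: "x \<in> {0<..<1}"
    have "x * x < 1 * 1" by (rule mult_strict_mono) (use x in auto)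
    then have pos: "0 < 1 - x * x" by simp
    show "((\<lambda>x. 1 / sqrt (1 - x * x)) has_real_derivative x * (1 / sqrt (1 - x * x)) * (1 / sqrt (1 - x * x)) * (1 / sqrt (1 - x * x))) (at x)"
      using pos by (auto intro!: derivative_eq_intros simp: field_simps)
  qed
next
  case Rq
  show ?case
  proof (intro exI[of _ "\<lambda>x. (-2) * x * (1 / (1 + x * x)) * (1 / (1 + x * x))"] conjI ballI)
    show "R (\<lambda>x. (-2) * x * (1 / (1 + x * x)) * (1 / (1 + x * x)))" by (intro R.intros)
    fix x :: real assume x: "x \<in> {0<..<1}"
    have pos: "0 < 1 + x * x" by (simp add: add_pos_nonneg)
    show "((\<lambda>x. 1 / (1 + x * x)) has_real_derivative (-2) * x * (1 / (1 + x * x)) * (1 / (1 + x * x))) (at x)"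
      using pos by (auto intro!: derivative_eq_intros simp: field_simps power2_eq_square)
  qed
next
  case (Radd f g)
  then obtain f' g' where "R f'" "R g'" "\<forall>x\<in>{0<..<1}. (f has_real_derivative f' x) (at x)"
    "\<forall>x\<in>{0<..<1}. (g has_real_derivative g' x) (at x)" by blast
  thus ?case by (intro exI[of _ "\<lambda>x. f' x + g' x"] conjI R.Radd) (auto intro!: derivative_eq_intros)
next
  case (Rmult f g)
  then obtain f' g' where "R f'" "R g'" "\<forall>x\<in>{0<..<1}. (f has_real_derivative f' x) (at x)"
    "\<forall>x\<in>{0<..<1}. (g has_real_derivative g' x) (at x)" by blast
  with Rmult.hyps show ?case by (intro exI[of _ "\<lambda>x. f' x * g x + f x * g' x"] conjI R.Radd R.Rmult) (auto intro!: derivative_eq_intros)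
qed

lemma R_smooth:
  assumes "R g" "\<forall>x\<in>{0<..<1::real}. f x = g x"
  shows "smooth_on {0<..<1} f"
proof -
  have main: "\<exists>h. R h \<and> (\<forall>x\<in>{0<..<1}. (deriv ^^ n) f x = h x)" for n
  proof (induction n)
    case 0 thus ?case using assms by auto
  next
    case (Suc n)
    then obtain h where h: "R h" "\<forall>x\<in>{0<..<1}. (deriv ^^ n) f x = h x" by blast
    obtain h' where h': "R h'" "\<forall>x\<in>{0<..<1}. (h has_real_derivative h' x) (at x)"
      using R_deriv[OF h(1)] by blast
    have "((deriv ^^ n) f has_real_derivative h' x) (at x)" if "x \<in> {0<..<1}" for x
      by (rule has_field_derivative_transform_within_open[OF h'(2)[rule_format, OF that] _ that]) (use h(2) in auto)
    hence "(deriv ^^ Suc n) f x = h' x" if "x \<in> {0<..<1}" for x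
      using that by (simp add: DERIV_imp_deriv)
    thus ?case using h' by blast
  qed
  show ?thesis unfolding smooth_on_def
  proof (intro allI ballI)
    fix n x assume x: "x \<in> {0<..<1::real}"
    obtain h where h: "R h" "\<forall>x\<in>{0<..<1}. (deriv ^^ n) f x = h x" using main by blast
    obtain h' where h': "\<forall>x\<in>{0<..<1}. (h has_real_derivative h' x) (at x)"
      using R_deriv[OF h(1)] by blast
    have "((deriv ^^ n) f has_real_derivative h' x) (at x)"
      by (rule has_field_derivative_transform_within_open[OF h'[rule_format, OF x] _ x]) (use h(2) in auto)
    thus "(deriv ^^ n) f differentiable at x" using real_differentiable_def by blast
  qed
qed



lemma b0_props:
  fixes a :: real assumes a: "0 < a" "a < 1"
  defines "b \<equiv> (1 - sqrt (1 - a * a)) * (1 / a)"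
  shows "0 < b" "b < 1" "hh b = a"
proof -
  define s where "s = sqrt (1 - a * a)"
  have aa: "a * a < 1 * 1" by (rule mult_strict_mono) (use a in auto)
  have ss: "s * s = 1 - a * a" using aa by (simp add: s_def)
  have s0: "0 < s" using aa by (simp add: s_def)
  have s1: "s < 1" using a by (simp add: s_def)
  have bd: "b = (1 - s) / a" by (simp add: b_def s_def)
  show "0 < b" using s1 a by (simp add: bd)
  have "1 - a < s"
  proof -
    have "(1 - a) * (1 - a) < s * s" using a by (simp add: ss algebra_simps)
    show ?thesis
    proof (rule ccontr)
      assume "\<not> 1 - a < s"
      hence "s \<le> 1 - a" by simp
      hence "s * s \<le> (1 - a) * (1 - a)" using s0 a by (intro mult_mono) auto
      with \<open>(1 - a) * (1 - a) < s * s\<close> show False by simp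
    qed
  qed
  thus "b < 1" using a by (simp add: bd divide_less_eq)
  have ba: "b * a = 1 - s" using a by (simp add: bd)
  have "b * b * (a * a) = (1 - s) * (1 - s)" using ba by (metis mult.assoc mult.left_commute)
  also have "a * a = (1 - s) * (1 + s)" using ss by (simp add: algebra_simps)
  finally have "b * b * (1 + s) = 1 - s" using s1 by (simp add: mult.assoc)
  hence q: "(1 + b * b) * (1 + s) = 2" by (simp add: algebra_simps)
  have "hh b = 2 * b * (1 + s) / ((1 + b * b) * (1 + s))" using s0 by (simp add: hh_def)
  also have "\<dots> = b * (1 + s)" using q by simp
  also have "\<dots> = (1 - s) * (1 + s) / a" by (simp add: bd)
  also have "\<dots> = (a * a) / a"
  proof -
    have "(1 - s) * (1 + s) = a * a" using ss by (simp add: algebra_simps)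
    thus ?thesis by simp
  qed
  also have "\<dots> = a" using a by simp
  finally show "hh b = a" .
qed

lemma hh_inj: assumes "b \<in> {0<..<1::real}" "c \<in> {0<..<1::real}" "hh b = hh c" shows "b = c"
proof -
  have p: "1 + b * b > 0" "1 + c * c > 0" by (simp_all add: add_pos_nonneg)
  have "b * c < 1 * 1" by (rule mult_strict_mono) (use assms in auto)
  moreover have "2 * b * (1 + c * c) = 2 * c * (1 + b * b)" using assms(3) p
    by (simp add: hh_def field_simps)
  hence "(b - c) * (1 - b * c) = 0" by (simp add: algebra_simps)
  ultimately show ?thesis by simp
qed

lemma orbit_self: "z1 \<in> unit_disc \<Longrightarrow> z2 \<in> unit_disc \<Longrightarrow> (z1 + z2, z1 * z2) \<in> symm_orbit (z1 + z2, z1 * z2)"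
proof -
  assume z: "z1 \<in> unit_disc" "z2 \<in> unit_disc"
  have "(\<lambda>x. x) \<in> disc_aut" unfolding disc_aut_def by (simp add: bij_betw_id[unfolded id_def])
  with z show ?thesis unfolding symm_orbit_def mem_Collect_eq
    by (intro exI[of _ "\<lambda>x. x"] exI[of _ z1] exI[of _ z2]) auto
qed

lemma P_iff:
  assumes a: "a \<in> {0<..<1::real}" and b: "b \<in> {0<..<1::real}"
  shows "symm_orbit (complex_of_real a, 0) = symm_orbit (0, - (complex_of_real b * complex_of_real b)) \<longleftrightarrow> hh b = a"
proof
  assume "hh b = a" thus "symm_orbit (complex_of_real a, 0) = symm_orbit (0, - (complex_of_real b * complex_of_real b))"
    using orbit_eq[of b] b by auto
next
  assume P: "symm_orbit (complex_of_real a, 0) = symm_orbit (0, - (complex_of_real b * complex_of_real b))"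
  define b1 where "b1 = (1 - sqrt (1 - a * a)) * (1 / a)"
  have b1: "0 < b1" "b1 < 1" "hh b1 = a" using b0_props[of a] a by (auto simp: b1_def)
  have E: "symm_orbit (0, - (complex_of_real b * complex_of_real b)) = symm_orbit (0, - (complex_of_real b1 * complex_of_real b1))"
    using P orbit_eq[of b1] b1 by auto
  have D: "complex_of_real t \<in> unit_disc" if "t \<in> {0<..<1}" for t using that by (simp add: unit_disc_def)
  have D': "- complex_of_real t \<in> unit_disc" if "t \<in> {0<..<1}" for t using that by (simp add: unit_disc_def)
  have m: "(0, - (complex_of_real t * complex_of_real t)) \<in> symm_orbit (0, - (complex_of_real t * complex_of_real t))"
    if "t \<in> {0<..<1}" for t
    using orbit_self[OF D[OF that] D'[OF that]] by simp
  have "hh b \<le> hh b1" using orbit_bound[of b1 b] m[of b] E b b1 by auto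
  moreover have "hh b1 \<le> hh b" using orbit_bound[of b b1] m[of b1] E b b1 by auto
  ultimately show "hh b = a" using b1 by simp
qed

theorem lemma2p9:
  shows "(\<forall>a \<in> {0<..<1::real}. \<exists>!b. b \<in> {0<..<1::real} \<and>
            symm_orbit (complex_of_real a, 0) = symm_orbit (0, - (complex_of_real b * complex_of_real b)))
       \<and> real_diffeomorphism {0<..<1} {0<..<1}
           (\<lambda>a. THE b. b \<in> {0<..<1::real} \<and>
              symm_orbit (complex_of_real a, 0) = symm_orbit (0, - (complex_of_real b * complex_of_real b)))"
proof -
  define P where "P = (\<lambda>a b. b \<in> {0<..<1::real} \<and>
              symm_orbit (complex_of_real a, 0) = symm_orbit (0, - (complex_of_real b * complex_of_real b)))"
  define b0 where "b0 = (\<lambda>a::real. (1 - sqrt (1 - a * a)) * (1 / a))"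
  have b0: "b0 a \<in> {0<..<1}" "hh (b0 a) = a" if "a \<in> {0<..<1}" for a
    using b0_props[of a] that by (auto simp: b0_def)
  have Piff: "P a b \<longleftrightarrow> b \<in> {0<..<1} \<and> hh b = a" if "a \<in> {0<..<1}" for a b
    using P_iff[OF that, of b] unfolding P_def by blast
  have ex1: "\<exists>!b. P a b" if a: "a \<in> {0<..<1}" for a
  proof (rule ex1I[of _ "b0 a"])
    show "P a (b0 a)" using Piff[OF a] b0[OF a] by blast
    fix b assume "P a b" thus "b = b0 a" using Piff[OF a] b0[OF a] hh_inj by metis
  qed
  define F where "F = (\<lambda>a. THE b. P a b)"
  have Fe: "F a = b0 a" if a: "a \<in> {0<..<1}" for a
    unfolding F_def by (rule the1_equality[OF ex1[OF a]]) (use Piff[OF a] b0[OF a] in blast)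
  have hhin: "hh b \<in> {0<..<1}" if "b \<in> {0<..<1}" for b
  proof -
    have "b0 (hh b) \<in> {0<..<1}" "hh (b0 (hh b)) = hh b" if "hh b \<in> {0<..<1}" using b0 that by auto
    have p: "1 + b * b > 0" by (simp add: add_pos_nonneg)
    have "0 < (1 - b)^2" using that by simp
    hence "2 * b < 1 + b * b" by (simp add: power2_eq_square algebra_simps)
    thus ?thesis using that p by (simp add: hh_def)
  qed
  have Fhh: "F (hh b) = b" if "b \<in> {0<..<1}" for b
  proof -
    have "b0 (hh b) \<in> {0<..<1}" "hh (b0 (hh b)) = hh b" using b0 hhin[OF that] by auto
    hence "b0 (hh b) = b" using hh_inj that by blast
    thus ?thesis using Fe hhin[OF that] by simp
  qed
  have bij: "bij_betw F {0<..<1} {0<..<1}"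
    by (rule bij_betw_byWitness[where f'=hh]) (use Fe b0 Fhh hhin in auto)
  have inv: "inv_into {0<..<1} F y = hh y" if "y \<in> {0<..<1}" for y
    by (rule inv_into_f_eq) (use bij bij_betw_def hhin Fhh that in auto)
  have s1: "smooth_on {0<..<1} F"
  proof (rule R_smooth)
    show "R (\<lambda>x. (1 + (-1) * sqrt (1 - x * x)) * (1 / x))" by (intro R.intros)
    show "\<forall>x\<in>{0<..<1::real}. F x = (1 + (-1) * sqrt (1 - x * x)) * (1 / x)" using Fe by (simp add: b0_def)
  qed
  have s2: "smooth_on {0<..<1} (inv_into {0<..<1} F)"
  proof (rule R_smooth)
    show "R (\<lambda>x. 2 * x * (1 / (1 + x * x)))" by (intro R.intros)
    show "\<forall>x\<in>{0<..<1::real}. inv_into {0<..<1} F x = 2 * x * (1 / (1 + x * x))" using inv by (simp add: hh_def)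
  qed
  have "\<forall>a \<in> {0<..<1::real}. \<exists>!b. P a b" using ex1 by blast
  moreover have "real_diffeomorphism {0<..<1} {0<..<1} F"
    unfolding real_diffeomorphism_def using bij s1 s2 by blast
  ultimately show ?thesis unfolding P_def F_def by simp
qed

end
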